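(* Let $\psi:[0,\infty)\to[0,\infty)$ be convex, nondecreasing, not identically zero, with $\psi(0)=0$, and for $L>0$ let $\Psi(z;L)=\exp\big(\frac{2}{L^2}\psi(Lz)\big)-1$. Suppose that for some $\tau>0$ and $L>0$ a random variable $Z$ satisfies $$P\Big(|Z|\ge \frac{\tau}{L}\,\psi^{-1}(L^2t/2)\Big)\le 2e^{-t}\quad\text{for all } t>0.$$ Then $\|Z\|_{\Psi(\cdot;\sqrt3L)}\le\sqrt3\,\tau$.
   Context: For $t>0$, $\psi^{-1}(t)$ is the unique $x\ge0$ with $\psi(x)=t$ (well defined since $\psi$ is continuous, unbounded and strictly increasing where positive). The Orlicz norm is $\|X\|_{\Psi}=\inf\{c>0:E\Psi(|X|/c)\le1\}$. *)

theory Defs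
  imports "HOL-Probability.Probability"
begin

definition psi_inv :: "(real \<Rightarrow> real) \<Rightarrow> real \<Rightarrow> real" where
  "psi_inv psi t = (THE x. x \<ge> 0 \<and> psi x = t)"

definition Psi_L :: "(real \<Rightarrow> real) \<Rightarrow> real \<Rightarrow> real \<Rightarrow> real" where
  "Psi_L psi L z = exp (2 / L^2 * psi (L * z)) - 1"

text \<open>Orlicz norm, valued in the extended reals (infimum of the empty set is infinity).
  The expectation is taken as a nonnegative Lebesgue integral.\<close>
definition orlicz_norm :: "'a measure \<Rightarrow> (real \<Rightarrow> real) \<Rightarrow> ('a \<Rightarrow> real) \<Rightarrow> ereal" where
  "orlicz_norm M Psi X =
     Inf {ereal c | c. c > 0 \<and> (\<integral>\<^sup>+ x. ennreal (Psi (\<bar>X x\<bar> / c)) \<partial>M) \<le> 1}"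

end

theory Submission
  imports Defs
begin

lemma psi_strict:
  fixes psi :: "real \<Rightarrow> real"
  assumes conv: "convex_on {0..} psi" and p0: "psi 0 = 0"
    and a: "0 \<le> a" "a < b" and pb: "psi b > 0"
  shows "psi a < psi b"
proof -
  have b: "b > 0" using a by simp
  have "psi ((1 - a/b) *\<^sub>R 0 + (a/b) *\<^sub>R b) \<le> (1 - a/b) * psi 0 + (a/b) * psi b"
    by (rule convex_onD[OF conv]) (use a b in auto)
  then have "psi a \<le> (a/b) * psi b" using b p0 by simp
  also have "\<dots> < psi b" using a b pb by (simp add: field_simps)
  finally show ?thesis .
qed

lemma psi_grow:
  fixes psi :: "real \<Rightarrow> real"
  assumes conv: "convex_on {0..} psi" and p0: "psi 0 = 0"
    and a: "0 < x0" "x0 \<le> y"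
  shows "psi x0 * y / x0 \<le> psi y"
proof -
  have y: "y > 0" using a by simp
  have "psi ((1 - x0/y) *\<^sub>R 0 + (x0/y) *\<^sub>R y) \<le> (1 - x0/y) * psi 0 + (x0/y) * psi y"
    by (rule convex_onD[OF conv]) (use a y in auto)
  then have "psi x0 \<le> (x0/y) * psi y" using y p0 by simp
  then show ?thesis using a y by (simp add: field_simps)
qed

lemma psi_small:
  fixes psi :: "real \<Rightarrow> real"
  assumes conv: "convex_on {0..} psi" and p0: "psi 0 = 0"
    and a: "0 < x0" "psi x0 > 0" and t: "t > 0"
  shows "\<exists>a>0. a < x0 \<and> psi a < t"
proof -
  define l where "l = min (1/2) (t / (2 * psi x0))"
  have l: "0 < l" "l \<le> 1/2" "l \<le> t / (2 * psi x0)" using a t by (auto simp: l_def)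
  have "psi ((1 - l) *\<^sub>R 0 + l *\<^sub>R x0) \<le> (1 - l) * psi 0 + l * psi x0"
    by (rule convex_onD[OF conv]) (use a l in auto)
  then have "psi (l * x0) \<le> l * psi x0" using p0 by simp
  also have "\<dots> \<le> t / (2 * psi x0) * psi x0" using l a by (intro mult_right_mono) auto
  also have "\<dots> < t" using a t by simp
  finally show ?thesis using l a by (intro exI[of _ "l * x0"]) auto
qed


lemma psi_exists:
  fixes psi :: "real \<Rightarrow> real"
  assumes conv: "convex_on {0..} psi" and p0: "psi 0 = 0"
    and mono: "mono_on {0..} psi" and nz: "\<exists>x\<ge>0. psi x \<noteq> 0"
    and nn: "\<forall>x\<ge>0. psi x \<ge> 0" and t: "t > 0"
  shows "\<exists>x\<ge>0. psi x = t"
proof -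
  obtain x0 where x0: "x0 \<ge> 0" "psi x0 \<noteq> 0" using nz by auto
  have px0: "psi x0 > 0" using x0 nn by force
  have x0p: "x0 > 0" using x0 p0 by (cases "x0 = 0") auto
  obtain a where a: "a > 0" "a < x0" "psi a < t" using psi_small[OF conv p0 x0p px0 t] by auto
  define y where "y = max x0 (t * x0 / psi x0)"
  have y: "x0 \<le> y" unfolding y_def by simp
  have "psi x0 * y / x0 \<le> psi y" by (rule psi_grow[OF conv p0 x0p y])
  moreover have "t \<le> psi x0 * y / x0"
  proof -
    have "t * x0 / psi x0 \<le> y" unfolding y_def by simp
    then have "t * x0 \<le> y * psi x0" using px0 by (simp add: field_simps)
    then show ?thesis using x0p by (simp add: field_simps)
  qed
  ultimately have ty: "t \<le> psi y" by simp
  have cont: "continuous_on {0<..} psi"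
    by (rule convex_on_continuous) (auto intro: convex_on_subset[OF conv])
  have "\<forall>x. a \<le> x \<and> x \<le> y \<longrightarrow> isCont psi x"
  proof (intro allI impI)
    fix x assume "a \<le> x \<and> x \<le> y"
    then have "x \<in> {0<..}" using a by auto
    then show "isCont psi x" using cont continuous_on_eq_continuous_at[of "{0<..}" psi] by auto
  qed
  then have "\<exists>x\<ge>a. x \<le> y \<and> psi x = t"
    by (intro IVT) (use a ty y in auto)
  then obtain x where "a \<le> x" "x \<le> y" "psi x = t" by blast
  then show ?thesis using a by (intro exI[of _ x]) auto
qed

lemma psi_inv_prop:
  fixes psi :: "real \<Rightarrow> real"
  assumes conv: "convex_on {0..} psi" and p0: "psi 0 = 0"
    and mono: "mono_on {0..} psi" and nz: "\<exists>x\<ge>0. psi x \<noteq> 0"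
    and nn: "\<forall>x\<ge>0. psi x \<ge> 0" and t: "t > 0"
  shows "psi_inv psi t \<ge> 0 \<and> psi (psi_inv psi t) = t"
proof -
  obtain x where x: "x \<ge> 0" "psi x = t" using psi_exists[OF assms] by auto
  have uniq: "z = x" if "z \<ge> 0" "psi z = t" for z
  proof (rule ccontr)
    assume "z \<noteq> x"
    then consider "z < x" | "x < z" by linarith
    then show False
    proof cases
      case 1
      have "psi z < psi x" using psi_strict[OF conv p0 that(1) 1] x t by linarith
      then show ?thesis using x that by linarith
    next
      case 2
      have "psi x < psi z" using psi_strict[OF conv p0 x(1) 2] x t that by linarith
      then show ?thesis using x that by linarith
    qed
  qed
  have "psi_inv psi t = x" unfolding psi_inv_def
  proof (rule the_equality)
    show "x \<ge> 0 \<and> psi x = t" using x by blast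
    show "z = x" if "z \<ge> 0 \<and> psi z = t" for z using uniq that by blast
  qed
  then show ?thesis using x by simp
qed

lemma psi_inv_iff:
  fixes psi :: "real \<Rightarrow> real"
  assumes conv: "convex_on {0..} psi" and p0: "psi 0 = 0"
    and mono: "mono_on {0..} psi" and nz: "\<exists>x\<ge>0. psi x \<noteq> 0"
    and nn: "\<forall>x\<ge>0. psi x \<ge> 0" and t: "t > 0" and y: "y \<ge> 0"
  shows "t \<le> psi y \<longleftrightarrow> psi_inv psi t \<le> y"
proof -
  have x: "psi_inv psi t \<ge> 0" "psi (psi_inv psi t) = t" using psi_inv_prop[OF conv p0 mono nz nn t] by auto
  show ?thesis
  proof
    assume h: "t \<le> psi y"
    show "psi_inv psi t \<le> y"
    proof (rule ccontr)
      assume "\<not> psi_inv psi t \<le> y"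
      then have "y < psi_inv psi t" by simp
      from psi_strict[OF conv p0 y this] x t h show False by linarith
    qed
  next
    assume "psi_inv psi t \<le> y"
    then have "psi (psi_inv psi t) \<le> psi y" using mono_onD[OF mono, of "psi_inv psi t" y] x y by simp
    then show "t \<le> psi y" using x by simp
  qed
qed


lemma inner_int:
  fixes w :: real assumes w: "w \<ge> 0"
  shows "(\<integral>\<^sup>+s. ennreal (exp (s/3)/3) * indicator {0..w} s \<partial>lborel) = ennreal (exp (w/3) - 1)"
proof -
  have d: "((\<lambda>s. exp (s/3)) has_vector_derivative exp (s/3)/3) (at s within {0..w})" for s
    unfolding has_real_derivative_iff_has_vector_derivative[symmetric]
    by (auto intro!: derivative_eq_intros)
  have "((\<lambda>s. exp (s/3)/3) has_integral (exp (w/3) - exp (0/3))) {0..w}"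
    by (rule fundamental_theorem_of_calculus) (use w d in auto)
  then have "((\<lambda>s. exp (s/3)/3) has_integral (exp (w/3) - 1)) {0..w}" by simp
  then have "((\<lambda>s. if s \<in> {0..w} then exp (s/3)/3 else 0) has_integral (exp (w/3) - 1)) UNIV"
    by (simp only: has_integral_restrict_UNIV)
  then have "(\<integral>\<^sup>+s. ennreal (if s \<in> {0..w} then exp (s/3)/3 else 0) \<partial>lborel) = ennreal (exp (w/3) - 1)"
    by (intro nn_integral_has_integral_lborel) auto
  moreover have "(\<integral>\<^sup>+s. ennreal (exp (s/3)/3) * indicator {0..w} s \<partial>lborel)
      = (\<integral>\<^sup>+s. ennreal (if s \<in> {0..w} then exp (s/3)/3 else 0) \<partial>lborel)"
    by (intro nn_integral_cong) (auto simp: indicator_def)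
  ultimately show ?thesis by simp
qed

lemma tail_int:
  "(\<integral>\<^sup>+s. ennreal (2/3 * exp ((-2/3) * s)) * indicator {0..} s \<partial>lborel) = 1"
proof -
  have fl: "filterlim (\<lambda>s::real. (-2/3) * s) at_bot at_top"
    by (rule filterlim_tendsto_neg_mult_at_bot[OF tendsto_const _ filterlim_ident]) simp
  have "((\<lambda>s::real. exp ((-2/3) * s)) \<longlongrightarrow> 0) at_top"
    by (rule filterlim_compose[OF exp_at_bot fl])
  then have lim: "((\<lambda>s::real. - exp ((-2/3) * s)) \<longlongrightarrow> - 0) at_top"
    by (rule tendsto_minus)
  have der: "DERIV (\<lambda>s::real. - exp ((-2/3) * s)) x :> 2/3 * exp ((-2/3) * x)" for x
    by (auto intro!: derivative_eq_intros)
  have "(\<integral>\<^sup>+s. ennreal (2/3 * exp ((-2/3) * s)) * indicator {0..} s \<partial>lborel)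
      = ennreal (- 0 - (- exp ((-2/3) * 0)))"
    by (rule nn_integral_FTC_atLeast[OF _ der _ lim]) auto
  then show ?thesis by simp
qed


theorem lemma17:
  fixes M :: "'a measure" and Z :: "'a \<Rightarrow> real" and psi :: "real \<Rightarrow> real"
    and \<tau> L :: real
  assumes "prob_space M"
    and "Z \<in> borel_measurable M"
    and "\<forall>x\<ge>0. psi x \<ge> 0"
    and "convex_on {0..} psi"
    and "mono_on {0..} psi"
    and "\<exists>x\<ge>0. psi x \<noteq> 0"
    and "psi 0 = 0"
    and "\<tau> > 0" and "L > 0"
    and "\<forall>t>0. measure M {x \<in> space M. \<bar>Z x\<bar> \<ge> \<tau> / L * psi_inv psi (L^2 * t / 2)}
                \<le> 2 * exp (- t)"
  shows "orlicz_norm M (Psi_L psi (sqrt 3 * L)) Z \<le> ereal (sqrt 3 * \<tau>)"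
proof -
  interpret P: prob_space M by (rule assms(1))
  note Zm[measurable] = assms(2)
  note nn = assms(3) and conv = assms(4) and mono = assms(5) and nz = assms(6) and p0 = assms(7)
  have tau: "\<tau> > 0" and L: "L > 0" using assms by auto
  define psi' where "psi' y = psi (max 0 y)" for y
  have mono': "mono psi'"
    unfolding psi'_def by (rule monoI, rule mono_onD[OF mono]) auto
  have psi'_m[measurable]: "psi' \<in> borel_measurable borel" by (rule borel_measurable_mono[OF mono'])
  define W where "W x = 2 / L^2 * psi' (L * \<bar>Z x\<bar> / \<tau>)" for x
  have Wm[measurable]: "W \<in> borel_measurable M" unfolding W_def by measurable
  have Weq: "W x = 2 / L^2 * psi (L * \<bar>Z x\<bar> / \<tau>)" for x
    unfolding W_def psi'_def using tau L by (simp add: max_def)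
  have W0: "W x \<ge> 0" for x
    unfolding Weq using nn tau L by (simp add: zero_le_mult_iff)
  define g where "g s = exp (s/3)/3" for s :: real
  define F where "F x s = (if 0 \<le> s \<and> s \<le> W x then ennreal (g s) else 0)" for x s
  have Fm: "(\<lambda>(x, s). F x s) \<in> borel_measurable (M \<Otimes>\<^sub>M lborel)"
    unfolding F_def g_def by measurable
  have s3: "sqrt 3 \<noteq> 0" by simp
  have key: "Psi_L psi (sqrt 3 * L) (\<bar>Z x\<bar> / (sqrt 3 * \<tau>)) = exp (W x / 3) - 1" for x
  proof -
    have a: "sqrt 3 * L * (\<bar>Z x\<bar> / (sqrt 3 * \<tau>)) = L * \<bar>Z x\<bar> / \<tau>" using s3 tau by (simp add: field_simps)
    have b: "(sqrt 3 * L)^2 = 3 * L^2" by (simp add: power_mult_distrib)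
    show ?thesis unfolding Psi_L_def a b Weq by (simp add: field_simps)
  qed
  have step1: "(\<integral>\<^sup>+x. ennreal (Psi_L psi (sqrt 3 * L) (\<bar>Z x\<bar> / (sqrt 3 * \<tau>))) \<partial>M)
      = (\<integral>\<^sup>+x. (\<integral>\<^sup>+s. F x s \<partial>lborel) \<partial>M)"
  proof (rule nn_integral_cong)
    fix x
    have "(\<integral>\<^sup>+s. F x s \<partial>lborel) = (\<integral>\<^sup>+s. ennreal (exp (s/3)/3) * indicator {0..W x} s \<partial>lborel)"
      by (rule nn_integral_cong) (auto simp: F_def g_def indicator_def)
    also have "\<dots> = ennreal (exp (W x / 3) - 1)" by (rule inner_int[OF W0])
    finally show "ennreal (Psi_L psi (sqrt 3 * L) (\<bar>Z x\<bar> / (sqrt 3 * \<tau>))) = (\<integral>\<^sup>+s. F x s \<partial>lborel)"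
      using key by simp
  qed
  interpret PS: pair_sigma_finite M lborel
    unfolding pair_sigma_finite_def using P.sigma_finite_measure_axioms lborel.sigma_finite_measure_axioms by blast
  have step2: "(\<integral>\<^sup>+x. (\<integral>\<^sup>+s. F x s \<partial>lborel) \<partial>M) = (\<integral>\<^sup>+s. (\<integral>\<^sup>+x. F x s \<partial>M) \<partial>lborel)"
    using PS.Fubini'[OF Fm] by simp
  have step3: "(\<integral>\<^sup>+x. F x s \<partial>M) \<le> ennreal (2/3 * exp ((-2/3) * s)) * indicator {0..} s" for s
  proof (cases "s \<ge> 0")
    case False
    then show ?thesis by (simp add: F_def)
  next
    case True
    define A where "A = {x \<in> space M. s \<le> W x}"
    have Am: "A \<in> sets M" unfolding A_def by measurable
    have "(\<integral>\<^sup>+x. F x s \<partial>M) = (\<integral>\<^sup>+x. ennreal (g s) * indicator A x \<partial>M)"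
      by (rule nn_integral_cong) (use True in \<open>auto simp: F_def A_def indicator_def\<close>)
    also have "\<dots> = ennreal (g s) * emeasure M A" using Am by (rule nn_integral_cmult_indicator)
    also have "\<dots> = ennreal (g s) * ennreal (measure M A)" by (simp add: P.emeasure_eq_measure)
    also have "measure M A \<le> 2 * exp (- s)"
    proof (cases "s = 0")
      case True
      have "measure M A \<le> 1" by (rule P.prob_le_1)
      moreover have "2 * exp (- s) = 2" using True by simp
      ultimately show ?thesis by linarith
    next
      case False
      then have sp: "s > 0" using \<open>s \<ge> 0\<close> by simp
      have tp: "L^2 * s / 2 > 0" using sp L by simp
      have "A = {x \<in> space M. \<bar>Z x\<bar> \<ge> \<tau> / L * psi_inv psi (L^2 * s / 2)}"
      proof -
        have "s \<le> W x \<longleftrightarrow> \<tau> / L * psi_inv psi (L^2 * s / 2) \<le> \<bar>Z x\<bar>" for x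
        proof -
          have y0: "L * \<bar>Z x\<bar> / \<tau> \<ge> 0" using L tau by simp
          have "s \<le> W x \<longleftrightarrow> L^2 * s / 2 \<le> psi (L * \<bar>Z x\<bar> / \<tau>)"
            unfolding Weq using L by (simp add: field_simps)
          also have "\<dots> \<longleftrightarrow> psi_inv psi (L^2 * s / 2) \<le> L * \<bar>Z x\<bar> / \<tau>"
            by (rule psi_inv_iff[OF conv p0 mono nz nn tp y0])
          also have "\<dots> \<longleftrightarrow> \<tau> / L * psi_inv psi (L^2 * s / 2) \<le> \<bar>Z x\<bar>"
            using L tau by (simp add: field_simps)
          finally show ?thesis .
        qed
        then show ?thesis unfolding A_def by auto
      qed
      then show ?thesis using assms(10) sp by simp
    qed
    then have "ennreal (g s) * ennreal (measure M A) \<le> ennreal (g s) * ennreal (2 * exp (- s))"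
      by (intro mult_left_mono ennreal_leI) auto
    also have "\<dots> = ennreal (2/3 * exp ((-2/3) * s))"
    proof -
      have "g s * (2 * exp (- s)) = 2/3 * exp ((-2/3) * s)"
      proof -
        have "exp (s/3) * exp (- s) = exp ((-2/3) * s)" unfolding exp_add[symmetric] by simp
        then show ?thesis unfolding g_def by (simp add: field_simps)
      qed
      then show ?thesis by (simp add: ennreal_mult[symmetric] g_def)
    qed
    finally show ?thesis using True by simp
  qed
  have bound: "(\<integral>\<^sup>+x. ennreal (Psi_L psi (sqrt 3 * L) (\<bar>Z x\<bar> / (sqrt 3 * \<tau>))) \<partial>M) \<le> 1"
  proof -
    have "(\<integral>\<^sup>+x. ennreal (Psi_L psi (sqrt 3 * L) (\<bar>Z x\<bar> / (sqrt 3 * \<tau>))) \<partial>M)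
        = (\<integral>\<^sup>+s. (\<integral>\<^sup>+x. F x s \<partial>M) \<partial>lborel)" using step1 step2 by simp
    also have "\<dots> \<le> (\<integral>\<^sup>+s. ennreal (2/3 * exp ((-2/3) * s)) * indicator {0..} s \<partial>lborel)"
      by (rule nn_integral_mono) (rule step3)
    also have "\<dots> = 1" by (rule tail_int)
    finally show ?thesis .
  qed
  have "ereal (sqrt 3 * \<tau>) \<in> {ereal c | c. c > 0 \<and> (\<integral>\<^sup>+ x. ennreal (Psi_L psi (sqrt 3 * L) (\<bar>Z x\<bar> / c)) \<partial>M) \<le> 1}"
    using bound tau by auto
  then show ?thesis unfolding orlicz_norm_def by (rule Inf_lower)
qed

end
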